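(* Let $N\ge2$ and $\alpha\in\mathbb{C}^N$. If $L_N$ is globally hypoelliptic, then $\mathcal{M}_N=\mathcal{M}_{N,\infty}\cap(\mathbb{Z}+\alpha_1\mathbb{Z}+\cdots+\alpha_N\mathbb{Z})^c$. If $L_N$ is not globally hypoelliptic, then $\mathcal{M}_N=\mathcal{M}_{N,\infty}$. In either case $\mathcal{M}_N$ is a $\mathcal{G}_\delta$ subset of $\mathbb{C}$.
   Context: $\mathbb{T}^n=\mathbb{R}^n/2\pi\mathbb{Z}^n$; $D_t=-i\partial_t$, $D_{x_j}=-i\partial_{x_j}$. A linear differential operator $P$ on $\mathbb{T}^n$ is globally hypoelliptic (GH) if $u\in\mathcal{D}'(\mathbb{T}^n)$ and $Pu\in\mathcal{C}^\infty(\mathbb{T}^n)$ imply $u\in\mathcal{C}^\infty(\mathbb{T}^n)$. For $\alpha\in\mathbb{C}^N$, $L_N=D_t+\sum_{j=1}^N\alpha_jD_{x_j}$ on $\mathbb{T}^{N+1}$, $P_{N,\lambda}=L_N-\lambda$, and $\mathcal{M}_N=\{\lambda\in\mathbb{C}: P_{N,\lambda}\text{ is not GH}\}$. For $(\tau,\xi)\in\mathbb{Z}\times\mathbb{Z}^N$ write $|(\tau,\xi)|=|\tau|+|\xi_1|+\cdots+|\xi_N|$ and $\rho_\lambda(\tau,\xi)=\tau+\alpha_1\xi_1+\cdots+\alpha_N\xi_N-\lambda$. For $j\in\mathbb{N}$ let $\mathcal{M}_N(j)=\bigcup_{(\tau,\xi)\in\mathbb{Z}\times\mathbb{Z}^N,\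 |(\tau,\xi)|>1}\{\lambda\in\mathbb{C}: |\rho_\lambda(\tau,\xi)|<|(\tau,\xi)|^{-j}\}$, and $\mathcal{M}_{N,\infty}=\bigcap_{j\in\mathbb{N}}\mathcal{M}_N(j)$. *)

theory Defs
  imports "HOL-Analysis.Analysis"
begin

text \<open>Frequencies of the torus T^n = R^n / 2 pi Z^n: integer vectors k, represented as
  functions nat => int vanishing at indices >= n.  For T^(N+1) with variables (t, x_1..x_N),
  index 0 is the dual variable tau of t and index j (1 <= j <= N) is xi_j.\<close>

definition freqs :: "nat \<Rightarrow> (nat \<Rightarrow> int) set" where
  "freqs n = {k. \<forall>i\<ge>n. k i = 0}"

definition freq_norm :: "nat \<Rightarrow> (nat \<Rightarrow> int) \<Rightarrow> int" where
  "freq_norm n k = (\<Sum>i<n. \<bar>k i\<bar>)"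

text \<open>Distributions on T^n, identified with their Fourier coefficient sequences
  (sequences of at most polynomial growth).\<close>
definition is_distribution :: "nat \<Rightarrow> ((nat \<Rightarrow> int) \<Rightarrow> complex) \<Rightarrow> bool" where
  "is_distribution n u \<longleftrightarrow>
     (\<exists>C m. \<forall>k\<in>freqs n. norm (u k) \<le> C * (1 + real_of_int (freq_norm n k)) ^ m)"

text \<open>Smooth functions on T^n, identified with their Fourier coefficient sequences
  (rapidly decreasing sequences).\<close>
definition is_smooth :: "nat \<Rightarrow> ((nat \<Rightarrow> int) \<Rightarrow> complex) \<Rightarrow> bool" where
  "is_smooth n u \<longleftrightarrow>
     (\<forall>m::nat. \<exists>C. \<forall>k\<in>freqs n. norm (u k) * (1 + real_of_int (freq_norm n k)) ^ m \<le> C)"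

text \<open>A constant-coefficient operator P on T^n with symbol p acts on Fourier
  coefficients by (P u)^(k) = p(k) u^(k).  Global hypoellipticity of P:\<close>
definition globally_hypoelliptic :: "nat \<Rightarrow> ((nat \<Rightarrow> int) \<Rightarrow> complex) \<Rightarrow> bool" where
  "globally_hypoelliptic n p \<longleftrightarrow>
     (\<forall>u. is_distribution n u \<and> is_smooth n (\<lambda>k. p k * u k) \<longrightarrow> is_smooth n u)"

text \<open>rho_lambda(tau, xi) = tau + alpha_1 xi_1 + ... + alpha_N xi_N - lambda, the symbol of
  P_{N,lambda} = D_t + sum_j alpha_j D_{x_j} - lambda (with k 0 = tau, k j = xi_j).\<close>
definition rho :: "nat \<Rightarrow> (nat \<Rightarrow> complex) \<Rightarrow> complex \<Rightarrow> (nat \<Rightarrow> int) \<Rightarrow> complex" where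
  "rho N \<alpha> lam k = of_int (k 0) + (\<Sum>j\<in>{1..N}. \<alpha> j * of_int (k j)) - lam"

definition M_set :: "nat \<Rightarrow> (nat \<Rightarrow> complex) \<Rightarrow> complex set" where
  "M_set N \<alpha> = {lam. \<not> globally_hypoelliptic (Suc N) (rho N \<alpha> lam)}"

definition M_j :: "nat \<Rightarrow> (nat \<Rightarrow> complex) \<Rightarrow> nat \<Rightarrow> complex set" where
  "M_j N \<alpha> j = (\<Union>k\<in>{k\<in>freqs (Suc N). freq_norm (Suc N) k > 1}.
      {lam. norm (rho N \<alpha> lam k) < 1 / real_of_int (freq_norm (Suc N) k) ^ j})"

definition M_infty :: "nat \<Rightarrow> (nat \<Rightarrow> complex) \<Rightarrow> complex set" where
  "M_infty N \<alpha> = (\<Inter>j\<in>{1..}. M_j N \<alpha> j)"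

definition lattice_set :: "nat \<Rightarrow> (nat \<Rightarrow> complex) \<Rightarrow> complex set" where
  "lattice_set N \<alpha> = (\<lambda>k. rho N \<alpha> 0 k) ` freqs (Suc N)"

end

theory Submission
  imports Defs
begin


lemma fn_nonneg: "0 \<le> freq_norm n k"
  unfolding freq_norm_def by (simp add: sum_nonneg)

lemma GH_suff:
  assumes H: "\<forall>k\<in>freqs n. R \<le> real_of_int (freq_norm n k) \<longrightarrow> 1 \<le> norm (p k) * (1 + real_of_int (freq_norm n k)) ^ M"
  shows "globally_hypoelliptic n p"
  unfolding globally_hypoelliptic_def
proof (intro allI impI)
  fix u assume a: "is_distribution n u \<and> is_smooth n (\<lambda>k. p k * u k)"
  then obtain C0 m0 where C0: "\<forall>k\<in>freqs n. norm (u k) \<le> C0 * (1 + real_of_int (freq_norm n k)) ^ m0"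
    unfolding is_distribution_def by blast
  show "is_smooth n u" unfolding is_smooth_def
  proof
    fix m
    obtain C where C: "\<forall>k\<in>freqs n. norm (p k * u k) * (1 + real_of_int (freq_norm n k)) ^ (m + M) \<le> C"
      using a unfolding is_smooth_def by blast
    define R' where "R' = max R 0"
    show "\<exists>C. \<forall>k\<in>freqs n. norm (u k) * (1 + real_of_int (freq_norm n k)) ^ m \<le> C"
    proof (intro exI[of _ "max C (max C0 0 * (1 + R') ^ m0 * (1 + R') ^ m)"] ballI)
      fix k assume k: "k \<in> freqs n"
      define x where "x = 1 + real_of_int (freq_norm n k)"
      have x1: "1 \<le> x" unfolding x_def using fn_nonneg[of n k] by simp
      show "norm (u k) * (1 + real_of_int (freq_norm n k)) ^ m \<le> max C (max C0 0 * (1 + R') ^ m0 * (1 + R') ^ m)"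
      proof (cases "R \<le> real_of_int (freq_norm n k)")
        case True
        have h1: "1 \<le> norm (p k) * x ^ M" using H k True unfolding x_def by blast
        have "norm (u k) * x ^ m \<le> norm (u k) * x ^ m * (norm (p k) * x ^ M)"
          using mult_left_mono[OF h1, of "norm (u k) * x ^ m"] x1 by simp
        also have "\<dots> = norm (p k * u k) * x ^ (m + M)"
          by (simp add: norm_mult power_add)
        also have "\<dots> \<le> C" using C k unfolding x_def by blast
        finally show ?thesis unfolding x_def by simp
      next
        case False
        have xR: "x \<le> 1 + R'" unfolding x_def R'_def using False by simp
        have "norm (u k) \<le> max C0 0 * x ^ m0"
          using C0 k x1 unfolding x_def
          by (smt (verit, ccfv_SIG) mult_right_mono zero_le_power)
        also have "\<dots> \<le> max C0 0 * (1 + R') ^ m0"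
          by (intro mult_left_mono power_mono) (use x1 xR in auto)
        finally have "norm (u k) * x ^ m \<le> max C0 0 * (1 + R') ^ m0 * (1 + R') ^ m"
          by (intro mult_mono power_mono) (use x1 xR in auto)
        then show ?thesis unfolding x_def by simp
      qed
    qed
  qed
qed

lemma GH_nec:
  assumes H: "\<forall>M::nat. \<forall>R::real. \<exists>k\<in>freqs n. R \<le> real_of_int (freq_norm n k) \<and> norm (p k) * (1 + real_of_int (freq_norm n k)) ^ M < 1"
  shows "\<not> globally_hypoelliptic n p"
proof -
  let ?x = "\<lambda>k. 1 + real_of_int (freq_norm n k)"
  have "\<forall>i::nat. \<exists>k. k \<in> freqs n \<and> real i \<le> real_of_int (freq_norm n k) \<and> norm (p k) * ?x k ^ i < 1"
    using H by blast
  note ex = this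
  obtain ks where ks: "\<And>i. ks i \<in> freqs n \<and> real i \<le> real_of_int (freq_norm n (ks i)) \<and> norm (p (ks i)) * ?x (ks i) ^ i < 1"
    using choice[OF ex] by blast
  define u where "u k = (if k \<in> range ks then 1 else 0 :: complex)" for k
  have x1: "1 \<le> ?x k" for k using fn_nonneg[of n k] by simp
  have dist: "is_distribution n u"
    unfolding is_distribution_def by (rule exI[of _ 1], rule exI[of _ 0]) (simp add: u_def)
  have sm: "is_smooth n (\<lambda>k. p k * u k)"
    unfolding is_smooth_def
  proof
    fix m
    define C where "C = 1 + (\<Sum>i<m. norm (p (ks i)) * ?x (ks i) ^ m)"
    have C0: "1 \<le> C" unfolding C_def using x1 by (simp add: sum_nonneg)
    show "\<exists>C. \<forall>k\<in>freqs n. norm (p k * u k) * ?x k ^ m \<le> C"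
    proof (intro exI[of _ C] ballI)
      fix k assume "k \<in> freqs n"
      show "norm (p k * u k) * ?x k ^ m \<le> C"
      proof (cases "k \<in> range ks")
        case False then show ?thesis using C0 by (simp add: u_def)
      next
        case True
        then obtain i where i: "k = ks i" by blast
        have e: "norm (p k * u k) * ?x k ^ m = norm (p (ks i)) * ?x (ks i) ^ m"
          using True i by (simp add: u_def)
        show ?thesis
        proof (cases "i < m")
          case True
          have "norm (p (ks i)) * ?x (ks i) ^ m \<le> (\<Sum>i<m. norm (p (ks i)) * ?x (ks i) ^ m)"
            by (rule member_le_sum) (use True x1 in auto)
          then show ?thesis using e unfolding C_def by simp
        next
          case False
          have "norm (p (ks i)) * ?x (ks i) ^ m \<le> norm (p (ks i)) * ?x (ks i) ^ i"
            by (intro mult_left_mono power_increasing) (use False x1 in auto)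
          also have "\<dots> < 1" using ks by blast
          finally show ?thesis using e C0 by simp
        qed
      qed
    qed
  qed
  have nsm: "\<not> is_smooth n u"
    unfolding is_smooth_def
  proof
    assume "\<forall>m. \<exists>C. \<forall>k\<in>freqs n. norm (u k) * ?x k ^ m \<le> C"
    then obtain C where C: "\<forall>k\<in>freqs n. norm (u k) * ?x k ^ 1 \<le> C" by blast
    define i where "i = nat \<lceil>C\<rceil>"
    have "norm (u (ks i)) * ?x (ks i) ^ 1 \<le> C" using C ks by blast
    moreover have "norm (u (ks i)) = 1" by (simp add: u_def)
    moreover have "real i \<le> real_of_int (freq_norm n (ks i))" using ks by blast
    moreover have "C \<le> real i" unfolding i_def by linarith
    ultimately show False by simp
  qed
  show ?thesis unfolding globally_hypoelliptic_def using dist sm nsm by blast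
qed

lemma GH_char:
  "globally_hypoelliptic n p \<longleftrightarrow> (\<exists>M::nat. \<exists>R::real. \<forall>k\<in>freqs n. R \<le> real_of_int (freq_norm n k) \<longrightarrow> 1 \<le> norm (p k) * (1 + real_of_int (freq_norm n k)) ^ M)"
  using GH_suff[of n _ p] GH_nec[of n p] by (meson not_le)



lemma rho_sub: "rho N \<alpha> lam k = rho N \<alpha> 0 k - lam"
  unfolding rho_def by simp

lemma rho_shift: "rho N \<alpha> (rho N \<alpha> 0 k0) k = rho N \<alpha> 0 (\<lambda>i. k i - k0 i)"
  unfolding rho_def by (simp add: sum_subtractf algebra_simps)

lemma freqs_diff: "k \<in> freqs n \<Longrightarrow> k0 \<in> freqs n \<Longrightarrow> (\<lambda>i. k i - k0 i) \<in> freqs n"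
  unfolding freqs_def by auto

lemma freqs_add: "k \<in> freqs n \<Longrightarrow> k0 \<in> freqs n \<Longrightarrow> (\<lambda>i. k i + k0 i) \<in> freqs n"
  unfolding freqs_def by auto

lemma fn_diff_le: "freq_norm n (\<lambda>i. a i - b i) \<le> freq_norm n a + freq_norm n b"
  unfolding freq_norm_def sum.distrib[symmetric] by (rule sum_mono) simp

lemma fn_diff_ge: "freq_norm n a \<le> freq_norm n (\<lambda>i. a i - b i) + freq_norm n b"
  unfolding freq_norm_def sum.distrib[symmetric] by (rule sum_mono) simp

lemma fn_add_le: "freq_norm n (\<lambda>i. a i + b i) \<le> freq_norm n a + freq_norm n b"
  unfolding freq_norm_def sum.distrib[symmetric] by (rule sum_mono) simp

lemma fn_add_ge: "freq_norm n a \<le> freq_norm n (\<lambda>i. a i + b i) + freq_norm n b"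
  unfolding freq_norm_def sum.distrib[symmetric] by (rule sum_mono) simp

lemma finite_ball_freqs: "finite {k\<in>freqs n. freq_norm n k \<le> R}"
proof (rule finite_subset)
  show "{k\<in>freqs n. freq_norm n k \<le> R} \<subseteq> (\<lambda>f i. if i<n then f i else 0) ` PiE {..<n} (\<lambda>_. {-R..R})"
  proof
    fix k assume k: "k \<in> {k\<in>freqs n. freq_norm n k \<le> R}"
    have "\<bar>k i\<bar> \<le> R" if "i < n" for i
    proof -
      have "\<bar>k i\<bar> \<le> (\<Sum>i<n. \<bar>k i\<bar>)" by (rule member_le_sum) (use that in auto)
      then show ?thesis using k unfolding freq_norm_def by simp
    qed
    then have "k i \<in> {-R..R}" if "i < n" for i
    proof -
      have "\<bar>k i\<bar> \<le> R" using that \<open>\<And>i. i < n \<Longrightarrow> \<bar>k i\<bar> \<le> R\<close> by blast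
      then show ?thesis by (smt (verit) atLeastAtMost_iff)
    qed
    then have "restrict k {..<n} \<in> PiE {..<n} (\<lambda>_. {-R..R})" by auto
    moreover have "k = (\<lambda>i. if i<n then restrict k {..<n} i else 0)"
      using k unfolding freqs_def by auto
    ultimately show "k \<in> (\<lambda>f i. if i<n then f i else 0) ` PiE {..<n} (\<lambda>_. {-R..R})" by blast
  qed
  show "finite ((\<lambda>f i. if i<n then f i else 0) ` PiE {..<n} (\<lambda>_. {-R..R}))"
    by (intro finite_imageI finite_PiE) auto
qed

lemma countable_freqs: "countable (freqs n)"
proof -
  have "freqs n = (\<Union>R::nat. {k\<in>freqs n. freq_norm n k \<le> int R})"
  proof (intro equalityI subsetI)
    fix k assume "k \<in> freqs n"
    then have "k \<in> {k\<in>freqs n. freq_norm n k \<le> int (nat (freq_norm n k))}" by simp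
    then show "k \<in> (\<Union>R::nat. {k\<in>freqs n. freq_norm n k \<le> int R})" by blast
  qed auto
  also have "countable \<dots>"
    by (rule countable_UN[OF _ countable_finite[OF finite_ball_freqs]]) simp
  finally show ?thesis .
qed

lemma sq_bound:
  fixes x y :: real
  assumes "0 \<le> x" "y \<le> 2 * x" "0 \<le> y"
  shows "(1 + y) ^ M \<le> (1 + x) ^ (2 * M)"
proof -
  have xx: "0 \<le> x * x" using assms by simp
  have "(1 + x) ^ 2 = 1 + 2 * x + x * x" by (simp add: power2_eq_square algebra_simps)
  then have "1 + y \<le> (1 + x) ^ 2" using assms xx by linarith
  then have "(1 + y) ^ M \<le> ((1 + x) ^ 2) ^ M" by (intro power_mono) (use assms in auto)
  then show ?thesis by (simp add: power_mult)
qed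

lemma M_set_char:
  "lam \<in> M_set N \<alpha> \<longleftrightarrow> (\<forall>M::nat. \<forall>R::real. \<exists>k\<in>freqs (Suc N). R \<le> real_of_int (freq_norm (Suc N) k) \<and>
      norm (rho N \<alpha> lam k) * (1 + real_of_int (freq_norm (Suc N) k)) ^ M < 1)"
  unfolding M_set_def GH_char by (auto simp: not_le)

lemma M_j_char:
  "lam \<in> M_j N \<alpha> j \<longleftrightarrow> (\<exists>k\<in>freqs (Suc N). 1 < freq_norm (Suc N) k \<and>
      norm (rho N \<alpha> lam k) < 1 / real_of_int (freq_norm (Suc N) k) ^ j)"
  unfolding M_j_def by auto

lemma subset_a: "M_set N \<alpha> \<subseteq> M_infty N \<alpha>"
proof
  fix lam assume lam: "lam \<in> M_set N \<alpha>"
  show "lam \<in> M_infty N \<alpha>" unfolding M_infty_def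
  proof (intro INT_I)
    fix j :: nat assume "j \<in> {1..}"
    obtain k where k: "k \<in> freqs (Suc N)" "2 \<le> real_of_int (freq_norm (Suc N) k)"
      "norm (rho N \<alpha> lam k) * (1 + real_of_int (freq_norm (Suc N) k)) ^ j < 1"
      using lam unfolding M_set_char by (meson)
    define x where "x = real_of_int (freq_norm (Suc N) k)"
    have x2: "2 \<le> x" using k unfolding x_def by simp
    have "norm (rho N \<alpha> lam k) < 1 / (1 + x) ^ j"
      using k(3) x2 unfolding x_def by (simp add: field_simps)
    also have "\<dots> \<le> 1 / x ^ j"
      by (intro divide_left_mono power_mono mult_pos_pos) (use x2 in auto)
    finally have "norm (rho N \<alpha> lam k) < 1 / x ^ j" .
    moreover have "1 < freq_norm (Suc N) k" using k(2) by simp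
    ultimately show "lam \<in> M_j N \<alpha> j" unfolding M_j_char x_def using k(1) by blast
  qed
qed



lemma finite_pos_lb:
  fixes f :: "'a \<Rightarrow> real"
  assumes "finite F" "\<forall>k\<in>F. 0 < f k"
  shows "\<exists>d>0. \<forall>k\<in>F. d \<le> f k"
proof -
  define d where "d = Min (insert 1 (f ` F))"
  have "0 < d" unfolding d_def using assms by (subst Min_gr_iff) auto
  moreover have "\<forall>k\<in>F. d \<le> f k" unfolding d_def using assms by (auto intro: Min_le)
  ultimately show ?thesis by blast
qed

lemma subset_b: "M_infty N \<alpha> - lattice_set N \<alpha> \<subseteq> M_set N \<alpha>"
proof
  fix lam assume lam: "lam \<in> M_infty N \<alpha> - lattice_set N \<alpha>"
  let ?fn = "freq_norm (Suc N)"
  have nz: "0 < norm (rho N \<alpha> lam k)" if "k \<in> freqs (Suc N)" for k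
  proof -
    have "rho N \<alpha> 0 k \<in> lattice_set N \<alpha>" unfolding lattice_set_def using that by blast
    then have "rho N \<alpha> 0 k \<noteq> lam" using lam by blast
    then show ?thesis by (simp add: rho_sub[of N \<alpha> lam])
  qed
  show "lam \<in> M_set N \<alpha>" unfolding M_set_char
  proof (intro allI)
    fix M :: nat and R :: real
    define F where "F = {k\<in>freqs (Suc N). ?fn k \<le> \<lceil>R\<rceil>}"
    have "finite F" unfolding F_def by (rule finite_ball_freqs)
    then obtain d where d: "0 < d" "\<forall>k\<in>F. d \<le> norm (rho N \<alpha> lam k)"
      using finite_pos_lb[of F "\<lambda>k. norm (rho N \<alpha> lam k)"] nz unfolding F_def by auto
    obtain j where j: "(1/2::real) ^ j < d" using real_arch_pow_inv[OF d(1), of "1/2"] by auto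
    define J where "J = j + 2 * M + 1"
    have "lam \<in> M_j N \<alpha> J" using lam unfolding M_infty_def J_def by auto
    then obtain k where k: "k \<in> freqs (Suc N)" "1 < ?fn k"
       "norm (rho N \<alpha> lam k) < 1 / real_of_int (?fn k) ^ J"
      unfolding M_j_char by blast
    define x where "x = real_of_int (?fn k)"
    have x2: "2 \<le> x" using k(2) unfolding x_def by simp
    have "1 / x ^ J \<le> 1 / 2 ^ J"
      by (intro divide_left_mono power_mono) (use x2 in auto)
    also have "\<dots> = (1/2) ^ J" by (simp add: power_divide)
    also have "\<dots> \<le> (1/2) ^ j" unfolding J_def by (intro power_decreasing) auto
    finally have "norm (rho N \<alpha> lam k) < d" using k(3) j unfolding x_def by linarith
    then have "k \<notin> F" using d(2) by (meson not_le)
    then have "\<not> ?fn k \<le> \<lceil>R\<rceil>" unfolding F_def using k(1) by blast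
    then have "R \<le> x" unfolding x_def by linarith
    moreover have "norm (rho N \<alpha> lam k) * (1 + x) ^ M < 1"
    proof -
      have "(1 + x) ^ M \<le> x ^ (2 * M)"
      proof -
        have xx: "2 * x \<le> x * x" using x2 by (intro mult_right_mono) auto
        have "1 + x \<le> x ^ 2" using x2 xx unfolding power2_eq_square by linarith
        then have "(1 + x) ^ M \<le> (x ^ 2) ^ M" by (intro power_mono) (use x2 in auto)
        then show ?thesis by (simp add: power_mult)
      qed
      also have "\<dots> \<le> x ^ J" unfolding J_def by (intro power_increasing) (use x2 in auto)
      finally have a: "(1 + x) ^ M \<le> x ^ J" .
      have "norm (rho N \<alpha> lam k) * (1 + x) ^ M \<le> norm (rho N \<alpha> lam k) * x ^ J"
        by (intro mult_left_mono a) auto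
      also have "\<dots> < 1"
        using k(3) x2 unfolding x_def by (simp add: field_simps)
      finally show ?thesis .
    qed
    ultimately show "\<exists>k\<in>freqs (Suc N). R \<le> real_of_int (?fn k) \<and>
      norm (rho N \<alpha> lam k) * (1 + real_of_int (?fn k)) ^ M < 1"
      using k(1) unfolding x_def by blast
  qed
qed

lemma part_c:
  assumes GH: "globally_hypoelliptic (Suc N) (rho N \<alpha> 0)"
  shows "M_set N \<alpha> \<inter> lattice_set N \<alpha> = {}"
proof (rule ccontr)
  let ?fn = "freq_norm (Suc N)"
  assume "M_set N \<alpha> \<inter> lattice_set N \<alpha> \<noteq> {}"
  then obtain k0 where k0: "k0 \<in> freqs (Suc N)" and lamM: "rho N \<alpha> 0 k0 \<in> M_set N \<alpha>"
    unfolding lattice_set_def by blast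
  obtain M R where MR: "\<forall>k\<in>freqs (Suc N). R \<le> real_of_int (?fn k) \<longrightarrow>
      1 \<le> norm (rho N \<alpha> 0 k) * (1 + real_of_int (?fn k)) ^ M"
    using GH unfolding GH_char by blast
  obtain k where k: "k \<in> freqs (Suc N)" "\<bar>R\<bar> + real_of_int (?fn k0) \<le> real_of_int (?fn k)"
    "norm (rho N \<alpha> (rho N \<alpha> 0 k0) k) * (1 + real_of_int (?fn k)) ^ (2 * M) < 1"
    using lamM unfolding M_set_char by blast
  define d where "d = (\<lambda>i. k i - k0 i)"
  have d: "d \<in> freqs (Suc N)" unfolding d_def using k(1) k0 by (rule freqs_diff)
  have "?fn k \<le> ?fn d + ?fn k0" unfolding d_def by (rule fn_diff_ge)
  then have "R \<le> real_of_int (?fn d)" using k(2) by linarith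
  then have 1: "1 \<le> norm (rho N \<alpha> 0 d) * (1 + real_of_int (?fn d)) ^ M" using MR d by blast
  have "?fn d \<le> ?fn k + ?fn k0" unfolding d_def by (rule fn_diff_le)
  then have "(1 + real_of_int (?fn d)) ^ M \<le> (1 + real_of_int (?fn k)) ^ (2 * M)"
    using k(2) fn_nonneg[of "Suc N" d] fn_nonneg[of "Suc N" k0]
    by (intro sq_bound) auto
  then have "norm (rho N \<alpha> 0 d) * (1 + real_of_int (?fn d)) ^ M \<le>
       norm (rho N \<alpha> 0 d) * (1 + real_of_int (?fn k)) ^ (2 * M)"
    by (intro mult_left_mono) auto
  moreover have e: "rho N \<alpha> 0 d = rho N \<alpha> (rho N \<alpha> 0 k0) k" unfolding d_def rho_shift ..
  ultimately show False using 1 k(3) unfolding e by linarith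
qed

lemma part_d:
  assumes nGH: "\<not> globally_hypoelliptic (Suc N) (rho N \<alpha> 0)"
  shows "lattice_set N \<alpha> \<subseteq> M_set N \<alpha>"
proof
  let ?fn = "freq_norm (Suc N)"
  fix lam assume "lam \<in> lattice_set N \<alpha>"
  then obtain k0 where k0: "k0 \<in> freqs (Suc N)" and lam: "lam = rho N \<alpha> 0 k0"
    unfolding lattice_set_def by blast
  have H: "0 \<in> M_set N \<alpha>" using nGH unfolding M_set_def by simp
  show "lam \<in> M_set N \<alpha>" unfolding M_set_char
  proof (intro allI)
    fix M :: nat and R :: real
    obtain k' where k': "k' \<in> freqs (Suc N)" "\<bar>R\<bar> + real_of_int (?fn k0) \<le> real_of_int (?fn k')"
      "norm (rho N \<alpha> 0 k') * (1 + real_of_int (?fn k')) ^ (2 * M) < 1"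
      using H unfolding M_set_char by blast
    define k where "k = (\<lambda>i. k' i + k0 i)"
    have kf: "k \<in> freqs (Suc N)" unfolding k_def using k'(1) k0 by (rule freqs_add)
    have r: "rho N \<alpha> lam k = rho N \<alpha> 0 k'" unfolding lam rho_shift k_def by simp
    have "?fn k' \<le> ?fn k + ?fn k0" unfolding k_def by (rule fn_add_ge)
    then have R: "R \<le> real_of_int (?fn k)" using k'(2) by linarith
    have "?fn k \<le> ?fn k' + ?fn k0" unfolding k_def by (rule fn_add_le)
    then have "(1 + real_of_int (?fn k)) ^ M \<le> (1 + real_of_int (?fn k')) ^ (2 * M)"
      using k'(2) fn_nonneg[of "Suc N" k] fn_nonneg[of "Suc N" k0]
      by (intro sq_bound) auto
    then have "norm (rho N \<alpha> lam k) * (1 + real_of_int (?fn k)) ^ M \<le>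
       norm (rho N \<alpha> 0 k') * (1 + real_of_int (?fn k')) ^ (2 * M)"
      unfolding r by (intro mult_left_mono) auto
    then have "norm (rho N \<alpha> lam k) * (1 + real_of_int (?fn k)) ^ M < 1"
      using k'(3) by linarith
    then show "\<exists>k\<in>freqs (Suc N). R \<le> real_of_int (?fn k) \<and>
      norm (rho N \<alpha> lam k) * (1 + real_of_int (?fn k)) ^ M < 1"
      using kf R by blast
  qed
qed

lemma open_M_j: "open (M_j N \<alpha> j)"
proof -
  have eq: "{lam. norm (rho N \<alpha> lam k) < r} = ball (rho N \<alpha> 0 k) r" for k r
  proof (rule set_eqI)
    fix lam
    have "rho N \<alpha> lam k = rho N \<alpha> 0 k - lam" by (rule rho_sub)
    then show "lam \<in> {lam. norm (rho N \<alpha> lam k) < r} \<longleftrightarrow> lam \<in> ball (rho N \<alpha> 0 k) r"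
      by (simp add: dist_norm)
  qed
  show ?thesis unfolding M_j_def eq by (intro open_UN ballI open_ball)
qed

lemma gdelta_M_infty: "gdelta_in euclidean (M_infty N \<alpha>)"
  unfolding M_infty_def
proof (rule gdelta_in_Inter)
  show "countable (M_j N \<alpha> ` {1..})" by (rule countable_image[OF countableI_type])
  have "M_j N \<alpha> 1 \<in> M_j N \<alpha> ` {1..}" by (rule imageI) simp
  then show "M_j N \<alpha> ` {1..} \<noteq> {}" by blast
  fix S assume "S \<in> M_j N \<alpha> ` {1..}"
  then obtain j where "S = M_j N \<alpha> j" by blast
  moreover have "openin euclidean (M_j N \<alpha> j)" using open_M_j[of N \<alpha> j] open_openin by blast
  ultimately have "openin euclidean S" by simp
  then show "gdelta_in euclidean S" by (rule open_imp_gdelta_in)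
qed

lemma fsigma_lattice: "fsigma_in euclidean (lattice_set N \<alpha>)"
proof -
  have "lattice_set N \<alpha> = \<Union> ((\<lambda>x. {x}) ` lattice_set N \<alpha>)" by blast
  moreover have "countable (lattice_set N \<alpha>)"
    unfolding lattice_set_def by (intro countable_image countable_freqs)
  moreover have "fsigma_in euclidean (\<Union> ((\<lambda>x. {x}) ` lattice_set N \<alpha>))"
  proof (rule fsigma_in_Union)
    show "countable ((\<lambda>x. {x}) ` lattice_set N \<alpha>)" using calculation(2) by simp
    fix S assume "S \<in> (\<lambda>x. {x}) ` lattice_set N \<alpha>"
    then obtain x where "S = {x}" by blast
    then have "closedin euclidean S" by (simp flip: closed_closedin)
    then show "fsigma_in euclidean S" by (rule closed_imp_fsigma_in)
  qed
  ultimately show ?thesis by simp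
qed

theorem proposition2p2:
  fixes N :: nat and \<alpha> :: "nat \<Rightarrow> complex"
  assumes "N \<ge> 2"
  shows "(globally_hypoelliptic (Suc N) (rho N \<alpha> 0) \<longrightarrow>
            M_set N \<alpha> = M_infty N \<alpha> \<inter> (- lattice_set N \<alpha>))
       \<and> (\<not> globally_hypoelliptic (Suc N) (rho N \<alpha> 0) \<longrightarrow> M_set N \<alpha> = M_infty N \<alpha>)
       \<and> gdelta_in euclidean (M_set N \<alpha>)"
proof -
  have a: "M_set N \<alpha> \<subseteq> M_infty N \<alpha>" by (rule subset_a)
  have b: "M_infty N \<alpha> - lattice_set N \<alpha> \<subseteq> M_set N \<alpha>" by (rule subset_b)
  have 1: "globally_hypoelliptic (Suc N) (rho N \<alpha> 0) \<longrightarrow>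
            M_set N \<alpha> = M_infty N \<alpha> \<inter> (- lattice_set N \<alpha>)"
    using a b part_c[of N \<alpha>] by blast
  have 2: "\<not> globally_hypoelliptic (Suc N) (rho N \<alpha> 0) \<longrightarrow> M_set N \<alpha> = M_infty N \<alpha>"
    using a b part_d[of N \<alpha>] by blast
  have g1: "gdelta_in euclidean (M_infty N \<alpha> - lattice_set N \<alpha>)"
    by (intro gdelta_in_diff gdelta_M_infty fsigma_lattice)
  have 3: "gdelta_in euclidean (M_set N \<alpha>)"
  proof (cases "globally_hypoelliptic (Suc N) (rho N \<alpha> 0)")
    case True
    then have "M_set N \<alpha> = M_infty N \<alpha> - lattice_set N \<alpha>" using 1 by blast
    then show ?thesis using g1 by simp
  next
    case False
    then show ?thesis using 2 gdelta_M_infty by simp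
  qed
  show ?thesis using 1 2 3 by blast
qed

end
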